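(* The graph parameters $\widetilde{\Delta}$, $\mathsf{cdeg}$, $\max\{\mathsf{cideg},\widetilde{\omega}\}$, $\max\{\alpha^{\ast},\widetilde{\omega}\}$ and $\max\{\theta^{\ast},\widetilde{\omega}\}$ are pairwise equivalent, i.e. for any two $p,q$ of them there is a function $g\colon\mathbb{N}\to\mathbb{N}$ with $q(G)\le g(p(G))$ for every finite graph $G$.
   Context: Two vertices are equivalent if they lie in exactly the same maximal cliques. $\widetilde{G}$ is the clique-quotient graph (equivalence classes as vertices, adjacency inherited from representatives) and $\widetilde{\Delta}(G)$ its maximum degree. $\widetilde{\omega}(G)$ is the maximum over maximal cliques $K$ of the number of equivalence classes meeting $K$; $\mathsf{cideg}(G)$ is the maximum over vertices of the number of maximal cliques containing it; $\mathsf{cdeg}(G)$ is the maximum over maximal cliques $K$ of the number of other maximal cliques intersecting $K$. $\alpha^{\ast}(G)=\max_v\alpha(G[N[v]])$, $\theta^{\ast}(G)=\max_v\theta(G[N[v]])$ with $\theta$ the clique-cover number. *)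

theory Defs
  imports Main
begin

text \<open>Vertices are natural numbers;
all parameters are isomorphism invariant, so this covers every finite graph.\<close>

definition simple_graph :: "nat set \<Rightarrow> (nat \<times> nat) set \<Rightarrow> bool" where
  "simple_graph V E \<longleftrightarrow> finite V \<and> E \<subseteq> V \<times> V \<and> sym E \<and> (\<forall>v. (v, v) \<notin> E)"

definition is_clique :: "nat set \<Rightarrow> (nat \<times> nat) set \<Rightarrow> nat set \<Rightarrow> bool" where
  "is_clique V E K \<longleftrightarrow> K \<subseteq> V \<and> (\<forall>x\<in>K. \<forall>y\<in>K. x \<noteq> y \<longrightarrow> (x, y) \<in> E)"

definition is_indep :: "nat set \<Rightarrow> (nat \<times> nat) set \<Rightarrow> nat set \<Rightarrow> bool" where
  "is_indep V E I \<longleftrightarrow> I \<subseteq> V \<and> (\<forall>x\<in>I. \<forall>y\<in>I. (x, y) \<notin> E)"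

definition max_cliques :: "nat set \<Rightarrow> (nat \<times> nat) set \<Rightarrow> nat set set" where
  "max_cliques V E = {K. is_clique V E K \<and> (\<forall>K'. is_clique V E K' \<and> K \<subseteq> K' \<longrightarrow> K' = K)}"

definition clique_equiv :: "nat set \<Rightarrow> (nat \<times> nat) set \<Rightarrow> nat \<Rightarrow> nat \<Rightarrow> bool" where
  "clique_equiv V E u v \<longleftrightarrow>
     {K \<in> max_cliques V E. u \<in> K} = {K \<in> max_cliques V E. v \<in> K}"

text \<open>Equivalence classes (vertices of the clique-quotient graph).\<close>
definition eq_classes :: "nat set \<Rightarrow> (nat \<times> nat) set \<Rightarrow> nat set set" where
  "eq_classes V E = (\<lambda>v. {u \<in> V. clique_equiv V E u v}) ` V"

definition quot_adj :: "nat set \<Rightarrow> (nat \<times> nat) set \<Rightarrow> nat set \<Rightarrow> nat set \<Rightarrow> bool" where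
  "quot_adj V E C D \<longleftrightarrow> C \<noteq> D \<and> (\<exists>x\<in>C. \<exists>y\<in>D. (x, y) \<in> E)"

definition maxn :: "nat set \<Rightarrow> nat" where
  "maxn S = Max (insert 0 S)"

definition quot_Delta :: "nat set \<Rightarrow> (nat \<times> nat) set \<Rightarrow> nat" where
  "quot_Delta V E = maxn ((\<lambda>C. card {D \<in> eq_classes V E. quot_adj V E C D}) ` eq_classes V E)"

definition quot_omega :: "nat set \<Rightarrow> (nat \<times> nat) set \<Rightarrow> nat" where
  "quot_omega V E = maxn ((\<lambda>K. card {C \<in> eq_classes V E. C \<inter> K \<noteq> {}}) ` max_cliques V E)"

definition cideg :: "nat set \<Rightarrow> (nat \<times> nat) set \<Rightarrow> nat" where
  "cideg V E = maxn ((\<lambda>v. card {K \<in> max_cliques V E. v \<in> K}) ` V)"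

definition cdeg :: "nat set \<Rightarrow> (nat \<times> nat) set \<Rightarrow> nat" where
  "cdeg V E = maxn ((\<lambda>K. card {K' \<in> max_cliques V E. K' \<noteq> K \<and> K' \<inter> K \<noteq> {}}) ` max_cliques V E)"

definition closed_nbhd :: "nat set \<Rightarrow> (nat \<times> nat) set \<Rightarrow> nat \<Rightarrow> nat set" where
  "closed_nbhd V E v = insert v {u \<in> V. (v, u) \<in> E}"

definition alpha_on :: "nat set \<Rightarrow> (nat \<times> nat) set \<Rightarrow> nat set \<Rightarrow> nat" where
  "alpha_on V E S = maxn {card I | I. I \<subseteq> S \<and> is_indep V E I}"

definition theta_on :: "nat set \<Rightarrow> (nat \<times> nat) set \<Rightarrow> nat set \<Rightarrow> nat" where
  "theta_on V E S = (LEAST k. \<exists>\<C>. finite \<C> \<and> card \<C> = k \<and>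
       (\<forall>C\<in>\<C>. C \<subseteq> S \<and> is_clique V E C) \<and> \<Union>\<C> = S)"

definition alpha_star :: "nat set \<Rightarrow> (nat \<times> nat) set \<Rightarrow> nat" where
  "alpha_star V E = maxn ((\<lambda>v. alpha_on V E (closed_nbhd V E v)) ` V)"

definition theta_star :: "nat set \<Rightarrow> (nat \<times> nat) set \<Rightarrow> nat" where
  "theta_star V E = maxn ((\<lambda>v. theta_on V E (closed_nbhd V E v)) ` V)"

end

theory Submission
  imports Defs
begin


lemma maxn_ge: "finite S \<Longrightarrow> x \<in> S \<Longrightarrow> x \<le> maxn S"
  unfolding maxn_def by simp
lemma maxn_le: "finite S \<Longrightarrow> (\<And>x. x \<in> S \<Longrightarrow> x \<le> b) \<Longrightarrow> maxn S \<le> b"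
  unfolding maxn_def by simp

lemma card_UN_bound:
  assumes "finite I" "\<And>i. i \<in> I \<Longrightarrow> card (A i) \<le> k"
  shows "card (\<Union>i\<in>I. A i) \<le> card I * k"
proof -
  have "card (\<Union>i\<in>I. A i) \<le> (\<Sum>i\<in>I. card (A i))" by (rule card_UN_le[OF assms(1)])
  also have "\<dots> \<le> card I * k" using sum_bounded_above[of I "\<lambda>i. card (A i)" k] assms(2) by simp
  finally show ?thesis .
qed

definition cls :: "nat set \<Rightarrow> (nat \<times> nat) set \<Rightarrow> nat \<Rightarrow> nat set" where
  "cls V E v = {u \<in> V. clique_equiv V E u v}"
definition ncl :: "nat set \<Rightarrow> (nat \<times> nat) set \<Rightarrow> nat \<Rightarrow> nat set set" where
  "ncl V E v = {X \<in> eq_classes V E. X \<inter> closed_nbhd V E v \<noteq> {}}"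
definition Nst :: "nat set \<Rightarrow> (nat \<times> nat) set \<Rightarrow> nat" where
  "Nst V E = maxn ((\<lambda>v. card (ncl V E v)) ` V)"
definition cmeet :: "nat set \<Rightarrow> (nat \<times> nat) set \<Rightarrow> nat set \<Rightarrow> nat set set" where
  "cmeet V E K = {X \<in> eq_classes V E. X \<inter> K \<noteq> {}}"

locale sg =
  fixes V :: "nat set" and E :: "(nat \<times> nat) set"
  assumes sg: "simple_graph V E"
begin

abbreviation "nb \<equiv> closed_nbhd V E"
abbreviation "MC \<equiv> max_cliques V E"
abbreviation "CL \<equiv> eq_classes V E"
abbreviation "eqv \<equiv> clique_equiv V E"

lemma finV: "finite V" using sg simple_graph_def by auto
lemma EV: "(x,y) \<in> E \<Longrightarrow> x \<in> V \<and> y \<in> V" using sg simple_graph_def by auto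
lemma Esym: "(x,y) \<in> E \<Longrightarrow> (y,x) \<in> E" using sg unfolding simple_graph_def sym_def by auto
lemma Eirr: "(x,x) \<notin> E" using sg simple_graph_def by auto

lemma mc_clique: "K \<in> MC \<Longrightarrow> is_clique V E K" by (simp add: max_cliques_def)
lemma mc_sub: "K \<in> MC \<Longrightarrow> K \<subseteq> V" by (simp add: max_cliques_def is_clique_def)
lemma fin_mc: "finite MC"
  by (rule finite_subset[of _ "Pow V"]) (auto dest: mc_sub simp: finV)

lemma extend: assumes "is_clique V E C" shows "\<exists>K \<in> MC. C \<subseteq> K"
proof -
  let ?A = "{K. is_clique V E K \<and> C \<subseteq> K}"
  have "finite ?A" by (rule finite_subset[of _ "Pow V"]) (auto simp: is_clique_def finV)
  moreover have "?A \<noteq> {}" using assms by auto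
  ultimately have "\<exists>m\<in>?A. \<forall>b\<in>?A. m \<le> b \<longrightarrow> m = b" by (rule finite_has_maximal)
  then obtain m where m: "m \<in> ?A" "\<forall>b\<in>?A. m \<le> b \<longrightarrow> m = b" ..
  have "\<forall>K'. is_clique V E K' \<and> m \<subseteq> K' \<longrightarrow> K' = m"
  proof (intro allI impI)
    fix K' assume K': "is_clique V E K' \<and> m \<subseteq> K'"
    then have "K' \<in> ?A" using m(1) by auto
    then have "m \<le> K' \<longrightarrow> m = K'" by (rule bspec[OF m(2)])
    then show "K' = m" using K' by simp
  qed
  then have "m \<in> MC" using m(1) unfolding max_cliques_def by simp
  then show ?thesis using m by auto
qed

lemma vertex_mc: "v \<in> V \<Longrightarrow> \<exists>K \<in> MC. v \<in> K"
  using extend[of "{v}"] by (auto simp: is_clique_def)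
lemma edge_mc: "(u,v) \<in> E \<Longrightarrow> \<exists>K \<in> MC. u \<in> K \<and> v \<in> K"
  using extend[of "{u,v}"] EV Esym by (auto simp: is_clique_def)

lemma equiv_mem: "eqv x y \<Longrightarrow> K \<in> MC \<Longrightarrow> x \<in> K \<longleftrightarrow> y \<in> K"
  unfolding clique_equiv_def by blast

lemma equiv_sym: "eqv x y \<Longrightarrow> eqv y x" unfolding clique_equiv_def by simp
lemma equiv_trans: "eqv x y \<Longrightarrow> eqv y z \<Longrightarrow> eqv x z" unfolding clique_equiv_def by simp

lemma equiv_adj: assumes "eqv x y" "x \<in> V" "x \<noteq> y" shows "(x,y) \<in> E"
proof -
  obtain K where K: "K \<in> MC" "x \<in> K" using vertex_mc assms(2) by blast
  then have "y \<in> K" using equiv_mem[OF assms(1)] by blast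
  then show ?thesis using K mc_clique assms(3) unfolding is_clique_def by blast
qed

lemma equiv_edge: assumes "eqv x x'" "(x,y) \<in> E" "y \<noteq> x'" shows "(x',y) \<in> E"
proof -
  obtain K where K: "K \<in> MC" "x \<in> K" "y \<in> K" using edge_mc assms(2) by blast
  then have "x' \<in> K" using equiv_mem[OF assms(1)] by blast
  moreover have "is_clique V E K" using mc_clique K(1) by blast
  ultimately show ?thesis using K(3) assms(3) unfolding is_clique_def by auto
qed

lemma cls_self: "x \<in> V \<Longrightarrow> x \<in> cls V E x" by (simp add: cls_def clique_equiv_def)
lemma cls_eq: "x \<in> cls V E y \<Longrightarrow> cls V E x = cls V E y"
  unfolding cls_def using equiv_trans equiv_sym by blast
lemma cls_sub: "cls V E x \<subseteq> V" by (auto simp: cls_def)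
lemma cls_equiv: "u \<in> cls V E x \<Longrightarrow> eqv u x" by (auto simp: cls_def)
lemma eqc: "CL = cls V E ` V" by (simp add: eq_classes_def cls_def[abs_def])
lemma fin_CL: "finite CL" by (simp add: eqc finV)

lemma in_class: "X \<in> CL \<Longrightarrow> x \<in> X \<Longrightarrow> X = cls V E x \<and> x \<in> V"
  unfolding eqc using cls_eq cls_sub by blast
lemma cls_in: "x \<in> V \<Longrightarrow> cls V E x \<in> CL" by (simp add: eqc)
lemma class_ne: "X \<in> CL \<Longrightarrow> X \<noteq> {}" unfolding eqc using cls_self by blast
lemma cls_disj: "X \<in> CL \<Longrightarrow> Y \<in> CL \<Longrightarrow> x \<in> X \<Longrightarrow> x \<in> Y \<Longrightarrow> X = Y"
  using in_class by metis

lemma class_clique: "X \<in> CL \<Longrightarrow> is_clique V E X"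
  unfolding is_clique_def
proof safe
  fix x assume "X \<in> CL" "x \<in> X" then show "x \<in> V" using in_class by blast
next
  fix x y assume X: "X \<in> CL" "x \<in> X" "y \<in> X" "x \<noteq> y"
  then have "X = cls V E y" "x \<in> V" using in_class by blast+
  then have "eqv x y" using X cls_equiv by blast
  then show "(x,y) \<in> E" using equiv_adj X \<open>x \<in> V\<close> by blast
qed

lemma mc_class: assumes "K \<in> MC" "X \<in> CL" "X \<inter> K \<noteq> {}" shows "X \<subseteq> K"
proof
  obtain x where x: "x \<in> X" "x \<in> K" using assms by blast
  fix u assume "u \<in> X"
  then have "eqv u x" using in_class[OF assms(2) x(1)] cls_equiv by blast
  then show "u \<in> K" using equiv_mem assms(1) x by blast
qed

lemma nb_sub: "v \<in> V \<Longrightarrow> nb v \<subseteq> V" by (auto simp: closed_nbhd_def)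
lemma nb_self: "v \<in> nb v" by (simp add: closed_nbhd_def)

lemma ncl_sub: assumes "X \<in> ncl V E v" "v \<in> V" shows "X \<subseteq> nb v"
proof
  obtain x where x: "x \<in> X" "x \<in> nb v" "X \<in> CL" using assms unfolding ncl_def by blast
  fix y assume y: "y \<in> X"
  show "y \<in> nb v"
  proof (cases "y = v")
    case True then show ?thesis by (simp add: nb_self)
  next
    case False
    have yx: "eqv y x" using in_class[OF x(3) x(1)] y cls_equiv by blast
    have yV: "y \<in> V" using in_class[OF x(3) y] by blast
    show ?thesis
    proof (cases "x = v")
      case True
      then have "(y,v) \<in> E" using equiv_adj yx yV False by blast
      then show ?thesis using Esym yV by (auto simp: closed_nbhd_def)
    next
      case xv: False
      then have "(x,v) \<in> E" using x(2) Esym by (auto simp: closed_nbhd_def)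
      then have "(y,v) \<in> E" using equiv_edge[OF equiv_sym[OF yx]] False by blast
      then show ?thesis using Esym yV by (auto simp: closed_nbhd_def)
    qed
  qed
qed

lemma mc_nb: assumes "K \<in> MC" "v \<in> K" shows "K \<subseteq> nb v"
  using mc_clique[OF assms(1)] assms(2) unfolding is_clique_def closed_nbhd_def by auto

lemma fin_ncl: "finite (ncl V E v)" using fin_CL by (simp add: ncl_def)
lemma fin_cmeet: "finite (cmeet V E K)" using fin_CL by (simp add: cmeet_def)

end


context sg
begin

lemma card_ncl_le: "v \<in> V \<Longrightarrow> card (ncl V E v) \<le> Nst V E"
  unfolding Nst_def by (rule maxn_ge) (auto simp: finV)

lemma Nst_le: "(\<And>v. v \<in> V \<Longrightarrow> card (ncl V E v) \<le> b) \<Longrightarrow> Nst V E \<le> b"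
  unfolding Nst_def by (rule maxn_le) (auto simp: finV)

lemma cmeet_le_omega: "K \<in> MC \<Longrightarrow> card (cmeet V E K) \<le> quot_omega V E"
  unfolding quot_omega_def cmeet_def by (rule maxn_ge) (auto simp: fin_mc)

lemma cideg_ge: "v \<in> V \<Longrightarrow> card {K \<in> MC. v \<in> K} \<le> cideg V E"
  unfolding cideg_def by (rule maxn_ge) (auto simp: finV)

lemma cdeg_ge: "K \<in> MC \<Longrightarrow> card {K' \<in> MC. K' \<noteq> K \<and> K' \<inter> K \<noteq> {}} \<le> cdeg V E"
  unfolding cdeg_def by (rule maxn_ge) (auto simp: fin_mc)

lemma clique_omega: assumes "is_clique V E C" shows "card (cmeet V E C) \<le> quot_omega V E"
proof -
  obtain K where K: "K \<in> MC" "C \<subseteq> K" using extend assms by blast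
  have "cmeet V E C \<subseteq> cmeet V E K" using K by (auto simp: cmeet_def)
  then have "card (cmeet V E C) \<le> card (cmeet V E K)" by (rule card_mono[OF fin_cmeet])
  then show ?thesis using cmeet_le_omega[OF K(1)] by simp
qed

lemma U_Delta: "quot_Delta V E \<le> Nst V E"
  unfolding quot_Delta_def
proof (rule maxn_le)
  show "finite ((\<lambda>C. card {D \<in> CL. quot_adj V E C D}) ` CL)" using fin_CL by simp
  fix k assume "k \<in> (\<lambda>C. card {D \<in> CL. quot_adj V E C D}) ` CL"
  then obtain v where v: "v \<in> V" and k: "k = card {D \<in> CL. quot_adj V E (cls V E v) D}"
    by (auto simp: eqc)
  have "{D \<in> CL. quot_adj V E (cls V E v) D} \<subseteq> ncl V E v"
  proof
    fix D assume D: "D \<in> {D \<in> CL. quot_adj V E (cls V E v) D}"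
    then obtain x y where xy: "x \<in> cls V E v" "y \<in> D" "(x,y) \<in> E" "cls V E v \<noteq> D" "D \<in> CL"
      unfolding quot_adj_def by auto
    have "y \<noteq> v"
    proof
      assume "y = v"
      then have "v \<in> D" using xy by simp
      then show False using cls_disj[OF cls_in[OF v] xy(5) cls_self[OF v]] xy(4) by blast
    qed
    then have "(v,y) \<in> E" using equiv_edge[OF cls_equiv[OF xy(1)] xy(3)] by blast
    then have "y \<in> nb v" by (auto simp: closed_nbhd_def dest: EV)
    then show "D \<in> ncl V E v" using xy by (auto simp: ncl_def)
  qed
  then have "k \<le> card (ncl V E v)" unfolding k by (rule card_mono[OF fin_ncl])
  then show "k \<le> Nst V E" using card_ncl_le[OF v] by simp
qed

lemma U_omega: "quot_omega V E \<le> Nst V E"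
  unfolding quot_omega_def
proof (rule maxn_le)
  show "finite ((\<lambda>K. card {C \<in> CL. C \<inter> K \<noteq> {}}) ` MC)" using fin_mc by simp
  fix k assume "k \<in> (\<lambda>K. card {C \<in> CL. C \<inter> K \<noteq> {}}) ` MC"
  then obtain K where K: "K \<in> MC" and k: "k = card {C \<in> CL. C \<inter> K \<noteq> {}}" by auto
  show "k \<le> Nst V E"
  proof (cases "K = {}")
    case True then show ?thesis using k by simp
  next
    case False
    then obtain v where v: "v \<in> K" by blast
    have vV: "v \<in> V" using mc_sub K v by blast
    have "{C \<in> CL. C \<inter> K \<noteq> {}} \<subseteq> ncl V E v" using mc_nb[OF K v] by (auto simp: ncl_def)
    then have "k \<le> card (ncl V E v)" unfolding k by (rule card_mono[OF fin_ncl])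
    then show ?thesis using card_ncl_le[OF vV] by simp
  qed
qed

lemma mc_union: assumes K: "K \<in> MC" shows "K = \<Union>(cmeet V E K)"
proof
  show "K \<subseteq> \<Union>(cmeet V E K)"
  proof
    fix x assume x: "x \<in> K"
    then have xV: "x \<in> V" using mc_sub K by blast
    have "cls V E x \<in> cmeet V E K" using cls_in[OF xV] cls_self[OF xV] x unfolding cmeet_def by blast
    then show "x \<in> \<Union>(cmeet V E K)" using cls_self[OF xV] by blast
  qed
  show "\<Union>(cmeet V E K) \<subseteq> K"
  proof
    fix x assume "x \<in> \<Union>(cmeet V E K)"
    then obtain X where X: "X \<in> cmeet V E K" "x \<in> X" by blast
    have "X \<subseteq> K" using mc_class[OF K] X(1) unfolding cmeet_def by blast
    then show "x \<in> K" using X by blast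
  qed
qed

lemma cideg_v: assumes v: "v \<in> V" shows "card {K \<in> MC. v \<in> K} \<le> 2 ^ Nst V E"
proof -
  have inj: "inj_on (cmeet V E) {K \<in> MC. v \<in> K}"
  proof (rule inj_onI)
    fix K1 K2 assume "K1 \<in> {K \<in> MC. v \<in> K}" "K2 \<in> {K \<in> MC. v \<in> K}" "cmeet V E K1 = cmeet V E K2"
    then show "K1 = K2" using mc_union[of K1] mc_union[of K2] by simp
  qed
  have sub: "cmeet V E ` {K \<in> MC. v \<in> K} \<subseteq> Pow (ncl V E v)"
    using mc_nb by (auto simp: cmeet_def ncl_def)
  have "card {K \<in> MC. v \<in> K} = card (cmeet V E ` {K \<in> MC. v \<in> K})" using card_image[OF inj] by simp
  also have "\<dots> \<le> card (Pow (ncl V E v))" by (rule card_mono[OF _ sub]) (simp add: fin_ncl)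
  also have "\<dots> = 2 ^ card (ncl V E v)" by (simp add: card_Pow fin_ncl)
  also have "\<dots> \<le> 2 ^ Nst V E" using card_ncl_le[OF v] by (simp add: power_increasing)
  finally show ?thesis .
qed

lemma U_cideg: "cideg V E \<le> 2 ^ Nst V E"
  unfolding cideg_def by (rule maxn_le) (auto simp: finV cideg_v)

lemma U_cdeg: "cdeg V E \<le> quot_omega V E * cideg V E"
  unfolding cdeg_def
proof (rule maxn_le)
  show "finite ((\<lambda>K. card {K' \<in> MC. K' \<noteq> K \<and> K' \<inter> K \<noteq> {}}) ` MC)" using fin_mc by simp
  fix k assume "k \<in> (\<lambda>K. card {K' \<in> MC. K' \<noteq> K \<and> K' \<inter> K \<noteq> {}}) ` MC"
  then obtain K where K: "K \<in> MC" and k: "k = card {K' \<in> MC. K' \<noteq> K \<and> K' \<inter> K \<noteq> {}}" by auto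
  define r where "r X = (SOME x. x \<in> X)" for X :: "nat set"
  have r: "X \<in> CL \<Longrightarrow> r X \<in> X" for X using class_ne unfolding r_def by (meson ex_in_conv someI_ex)
  have sub: "{K' \<in> MC. K' \<noteq> K \<and> K' \<inter> K \<noteq> {}} \<subseteq> (\<Union>X\<in>cmeet V E K. {K' \<in> MC. r X \<in> K'})"
  proof
    fix K' assume K': "K' \<in> {K' \<in> MC. K' \<noteq> K \<and> K' \<inter> K \<noteq> {}}"
    then obtain x where x: "x \<in> K'" "x \<in> K" "K' \<in> MC" by blast
    have xV: "x \<in> V" using mc_sub K x by blast
    let ?X = "cls V E x"
    have X: "?X \<in> cmeet V E K" using cls_in[OF xV] cls_self[OF xV] x by (auto simp: cmeet_def)
    have "r ?X \<in> ?X" using r cls_in[OF xV] by blast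
    then have "eqv (r ?X) x" by (rule cls_equiv)
    then have "r ?X \<in> K'" using equiv_mem x by blast
    then show "K' \<in> (\<Union>X\<in>cmeet V E K. {K' \<in> MC. r X \<in> K'})" using X x by blast
  qed
  have "k \<le> card (\<Union>X\<in>cmeet V E K. {K' \<in> MC. r X \<in> K'})"
    unfolding k by (rule card_mono[OF _ sub]) (rule finite_subset[OF _ fin_mc], blast)
  also have "\<dots> \<le> card (cmeet V E K) * cideg V E"
  proof (rule card_UN_bound[OF fin_cmeet])
    fix X assume "X \<in> cmeet V E K"
    then have "X \<in> CL" by (simp add: cmeet_def)
    then have "r X \<in> V" using r in_class by blast
    then show "card {K' \<in> MC. r X \<in> K'} \<le> cideg V E" by (rule cideg_ge)
  qed
  also have "\<dots> \<le> quot_omega V E * cideg V E" using cmeet_le_omega[OF K] by simp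
  finally show "k \<le> quot_omega V E * cideg V E" .
qed

lemma indep_le_ncl: assumes v: "v \<in> V" and I: "I \<subseteq> nb v" "is_indep V E I"
  shows "card I \<le> card (ncl V E v)"
proof -
  have IV: "I \<subseteq> V" using I nb_sub v by blast
  have inj: "inj_on (cls V E) I"
  proof (rule inj_onI)
    fix x y assume xy: "x \<in> I" "y \<in> I" "cls V E x = cls V E y"
    show "x = y"
    proof (rule ccontr)
      assume ne: "x \<noteq> y"
      have "x \<in> cls V E y" using xy cls_self IV by (metis subsetD)
      then have "(x,y) \<in> E" using equiv_adj[OF cls_equiv] ne IV xy by blast
      then show False using I xy unfolding is_indep_def by blast
    qed
  qed
  have "cls V E ` I \<subseteq> ncl V E v"
  proof
    fix X assume "X \<in> cls V E ` I"
    then obtain x where x: "x \<in> I" "X = cls V E x" by blast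
    have xV: "x \<in> V" using IV x by blast
    show "X \<in> ncl V E v" using cls_in[OF xV] cls_self[OF xV] x I(1) unfolding ncl_def by blast
  qed
  then have "card (cls V E ` I) \<le> card (ncl V E v)" by (rule card_mono[OF fin_ncl])
  then show ?thesis using card_image[OF inj] by simp
qed

lemma fin_alpha_set: "finite {card I | I. I \<subseteq> S \<and> is_indep V E I}"
proof (rule finite_subset[of _ "{..card V}"])
  show "{card I | I. I \<subseteq> S \<and> is_indep V E I} \<subseteq> {..card V}"
    using card_mono[OF finV] by (auto simp: is_indep_def)
qed simp

lemma U_alpha: "alpha_star V E \<le> Nst V E"
  unfolding alpha_star_def
proof (rule maxn_le)
  show "finite ((\<lambda>v. alpha_on V E (nb v)) ` V)" using finV by simp
  fix k assume "k \<in> (\<lambda>v. alpha_on V E (nb v)) ` V"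
  then obtain v where v: "v \<in> V" and k: "k = alpha_on V E (nb v)" by auto
  have "k \<le> card (ncl V E v)" unfolding k alpha_on_def
    by (rule maxn_le[OF fin_alpha_set]) (auto intro: indep_le_ncl[OF v])
  then show "k \<le> Nst V E" using card_ncl_le[OF v] by simp
qed

lemma union_ncl: assumes v: "v \<in> V" shows "\<Union>(ncl V E v) = nb v"
proof
  show "\<Union>(ncl V E v) \<subseteq> nb v" using ncl_sub[OF _ v] by blast
  show "nb v \<subseteq> \<Union>(ncl V E v)"
  proof
    fix x assume x: "x \<in> nb v"
    then have xV: "x \<in> V" using nb_sub[OF v] by blast
    have "cls V E x \<in> ncl V E v" using cls_in[OF xV] cls_self[OF xV] x unfolding ncl_def by blast
    then show "x \<in> \<Union>(ncl V E v)" using cls_self[OF xV] by blast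
  qed
qed

lemma theta_le_ncl: assumes v: "v \<in> V" shows "theta_on V E (nb v) \<le> card (ncl V E v)"
  unfolding theta_on_def
proof (rule Least_le)
  show "\<exists>\<C>. finite \<C> \<and> card \<C> = card (ncl V E v) \<and>
       (\<forall>C\<in>\<C>. C \<subseteq> nb v \<and> is_clique V E C) \<and> \<Union>\<C> = nb v"
  proof (intro exI[of _ "ncl V E v"] conjI ballI)
    show "finite (ncl V E v)" by (rule fin_ncl)
    show "card (ncl V E v) = card (ncl V E v)" by simp
    show "\<Union>(ncl V E v) = nb v" by (rule union_ncl[OF v])
    fix C assume C: "C \<in> ncl V E v"
    show "C \<subseteq> nb v" by (rule ncl_sub[OF C v])
    have "C \<in> CL" using C by (simp add: ncl_def)
    then show "is_clique V E C" by (rule class_clique)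
  qed
qed

lemma U_theta: "theta_star V E \<le> Nst V E"
  unfolding theta_star_def
proof (rule maxn_le)
  show "finite ((\<lambda>v. theta_on V E (nb v)) ` V)" using finV by simp
  fix k assume "k \<in> (\<lambda>v. theta_on V E (nb v)) ` V"
  then obtain v where v: "v \<in> V" and k: "k = theta_on V E (nb v)" by auto
  then show "k \<le> Nst V E" using theta_le_ncl[OF v] card_ncl_le[OF v] by simp
qed

end


context sg
begin

lemma ramsey:
  "finite S \<Longrightarrow> S \<subseteq> V \<Longrightarrow> (\<And>I. I \<subseteq> S \<Longrightarrow> is_indep V E I \<Longrightarrow> card I < a)
   \<Longrightarrow> (\<And>C. C \<subseteq> S \<Longrightarrow> is_clique V E C \<Longrightarrow> card C < w) \<Longrightarrow> card S < 2^(a+w)"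
proof (induction "a+w" arbitrary: a w S rule: less_induct)
  case less
  show ?case
  proof (cases "S = {}")
    case True then show ?thesis by simp
  next
    case False
    then obtain x where x: "x \<in> S" by blast
    have xV: "x \<in> V" using x less.prems by blast
    have a1: "1 < a + 0" using less.prems(3)[of "{x}"] x xV Eirr by (auto simp: is_indep_def)
    have w1: "1 < w + 0" using less.prems(4)[of "{x}"] x xV by (auto simp: is_clique_def)
    define N where "N = {y \<in> S. (x,y) \<in> E}"
    define M where "M = {y \<in> S. y \<noteq> x \<and> (x,y) \<notin> E}"
    have S: "S = insert x (N \<union> M)" using x by (auto simp: N_def M_def)
    have xN: "x \<notin> N" "x \<notin> M" using Eirr by (auto simp: N_def M_def)
    have fN: "finite N" "finite M" using less.prems(1) by (auto simp: N_def M_def)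
    have cS: "card S \<le> 1 + card N + card M"
      using S xN fN card_Un_le[of N M] by simp
    have cN: "card N < 2^(a + (w-1))"
    proof (rule less.hyps)
      show "a + (w - 1) < a + w" using w1 by simp
      show "finite N" by fact
      show "N \<subseteq> V" using less.prems(2) by (auto simp: N_def)
      show "card I < a" if "I \<subseteq> N" "is_indep V E I" for I
        using less.prems(3)[of I] that by (auto simp: N_def)
      show "card C < w - 1" if C: "C \<subseteq> N" "is_clique V E C" for C
      proof -
        have "is_clique V E (insert x C)" using C xV Esym unfolding is_clique_def N_def by blast
        moreover have "insert x C \<subseteq> S" using C x by (auto simp: N_def)
        ultimately have "card (insert x C) < w" using less.prems(4) by blast
        moreover have "finite C" using C fN finite_subset by blast
        moreover have "x \<notin> C" using C xN by blast
        ultimately show ?thesis by simp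
      qed
    qed
    have cM: "card M < 2^((a-1) + w)"
    proof (rule less.hyps)
      show "(a - 1) + w < a + w" using a1 by simp
      show "finite M" by fact
      show "M \<subseteq> V" using less.prems(2) by (auto simp: M_def)
      show "card C < w" if "C \<subseteq> M" "is_clique V E C" for C
        using less.prems(4)[of C] that by (auto simp: M_def)
      show "card I < a - 1" if I: "I \<subseteq> M" "is_indep V E I" for I
      proof -
        have "is_indep V E (insert x I)" using I xV Esym Eirr unfolding is_indep_def M_def by blast
        moreover have "insert x I \<subseteq> S" using I x by (auto simp: M_def)
        ultimately have "card (insert x I) < a" using less.prems(3) by blast
        moreover have "finite I" using I fN finite_subset by blast
        moreover have "x \<notin> I" using I xN by blast
        ultimately show ?thesis by simp
      qed
    qed
    have e1: "a + (w - 1) = a + w - 1" "(a - 1) + w = a + w - 1" using a1 w1 by auto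
    have e2: "(2::nat)^(a+w) = 2^(a+w-1) + 2^(a+w-1)"
    proof -
      have "a + w = Suc (a + w - 1)" using a1 by simp
      then have "(2::nat)^(a+w) = 2 * 2^(a+w-1)" by (metis power_Suc)
      then show ?thesis by simp
    qed
    show ?thesis using cS cN cM e1 e2 by simp
  qed
qed


lemma L_Delta: assumes v: "v \<in> V" shows "card (ncl V E v) \<le> quot_Delta V E + 1"
proof -
  let ?D = "{D \<in> CL. quot_adj V E (cls V E v) D}"
  have sub: "ncl V E v \<subseteq> insert (cls V E v) ?D"
  proof
    fix X assume X: "X \<in> ncl V E v"
    show "X \<in> insert (cls V E v) ?D"
    proof (cases "X = cls V E v")
      case True thus ?thesis by simp
    next
      case False
      obtain x where x: "x \<in> X" "x \<in> nb v" "X \<in> CL" using X unfolding ncl_def by blast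
      have "x \<noteq> v" using False in_class[OF x(3) x(1)] by auto
      then have "(v,x) \<in> E" using x(2) by (simp add: closed_nbhd_def)
      then have "quot_adj V E (cls V E v) X"
        using False cls_self[OF v] x(1) unfolding quot_adj_def by blast
      then show ?thesis using x(3) by simp
    qed
  qed
  have "card (ncl V E v) \<le> card (insert (cls V E v) ?D)"
    by (rule card_mono[OF _ sub]) (simp add: fin_CL)
  also have "\<dots> \<le> Suc (card ?D)" using fin_CL by (simp add: card_insert_if)
  also have "card ?D \<le> quot_Delta V E"
    unfolding quot_Delta_def using cls_in[OF v] fin_CL by (intro maxn_ge) auto
  finally show ?thesis by simp
qed

lemma L_A: assumes v: "v \<in> V" shows "card (ncl V E v) \<le> cideg V E * quot_omega V E"
proof -
  have sub: "ncl V E v \<subseteq> (\<Union>K\<in>{K\<in>MC. v\<in>K}. cmeet V E K)"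
  proof
    fix X assume X: "X \<in> ncl V E v"
    obtain x where x: "x \<in> X" "x \<in> nb v" "X \<in> CL" using X unfolding ncl_def by blast
    have "\<exists>K\<in>MC. v \<in> K \<and> x \<in> K"
    proof (cases "x = v")
      case True then show ?thesis using vertex_mc[OF v] by blast
    next
      case False then have "(v,x) \<in> E" using x(2) by (simp add: closed_nbhd_def)
      then show ?thesis using edge_mc by blast
    qed
    then obtain K where "K \<in> MC" "v \<in> K" "x \<in> K" by blast
    then show "X \<in> (\<Union>K\<in>{K\<in>MC. v\<in>K}. cmeet V E K)" using x unfolding cmeet_def by blast
  qed
  have "card (ncl V E v) \<le> card (\<Union>K\<in>{K\<in>MC. v\<in>K}. cmeet V E K)"
    by (rule card_mono[OF _ sub]) (auto simp: fin_mc fin_cmeet)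
  also have "\<dots> \<le> card {K\<in>MC. v\<in>K} * quot_omega V E"
    by (rule card_UN_bound) (auto simp: fin_mc cmeet_le_omega)
  also have "\<dots> \<le> cideg V E * quot_omega V E" using cideg_ge[OF v] by (simp add: mult_le_mono1)
  finally show ?thesis .
qed

lemma L_cideg: "cideg V E \<le> cdeg V E + 1"
  unfolding cideg_def
proof (rule maxn_le)
  show "finite ((\<lambda>v. card {K \<in> MC. v \<in> K}) ` V)" using finV by simp
  fix k assume "k \<in> (\<lambda>v. card {K \<in> MC. v \<in> K}) ` V"
  then obtain v where v: "v \<in> V" and k: "k = card {K \<in> MC. v \<in> K}" by auto
  obtain K0 where K0: "K0 \<in> MC" "v \<in> K0" using vertex_mc[OF v] by blast
  let ?S = "{K' \<in> MC. K' \<noteq> K0 \<and> K' \<inter> K0 \<noteq> {}}"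
  have sub: "{K \<in> MC. v \<in> K} \<subseteq> insert K0 ?S" using K0 by blast
  have "k \<le> card (insert K0 ?S)" unfolding k by (rule card_mono[OF _ sub]) (simp add: fin_mc)
  also have "\<dots> \<le> Suc (card ?S)" using fin_mc by (simp add: card_insert_if)
  also have "card ?S \<le> cdeg V E" by (rule cdeg_ge[OF K0(1)])
  finally show "k \<le> cdeg V E + 1" by simp
qed

lemma L_omega: "quot_omega V E \<le> 2 ^ cdeg V E"
  unfolding quot_omega_def
proof (rule maxn_le)
  show "finite ((\<lambda>K. card {C \<in> CL. C \<inter> K \<noteq> {}}) ` MC)" using fin_mc by simp
  fix k assume "k \<in> (\<lambda>K. card {C \<in> CL. C \<inter> K \<noteq> {}}) ` MC"
  then obtain K where K: "K \<in> MC" and k: "k = card (cmeet V E K)" by (auto simp: cmeet_def)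
  let ?S = "{K' \<in> MC. K' \<noteq> K \<and> K' \<inter> K \<noteq> {}}"
  define f where "f X = {K' \<in> MC. K' \<noteq> K \<and> X \<subseteq> K'}" for X
  have key: "x \<in> K' \<longleftrightarrow> K' = K \<or> K' \<in> f X"
    if X: "X \<in> cmeet V E K" and K': "K' \<in> MC" and x: "x \<in> X" for X K' x
  proof -
    have XK: "X \<subseteq> K" using mc_class[OF K] X by (simp add: cmeet_def)
    have XCL: "X \<in> CL" using X by (simp add: cmeet_def)
    show ?thesis
    proof
      assume "x \<in> K'" then have "X \<subseteq> K'" using mc_class[OF K' XCL] x by blast
      then show "K' = K \<or> K' \<in> f X" using K' by (auto simp: f_def)
    next
      assume "K' = K \<or> K' \<in> f X" then show "x \<in> K'" using XK x by (auto simp: f_def)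
    qed
  qed
  have inj: "inj_on f (cmeet V E K)"
  proof (rule inj_onI)
    fix X Y assume X: "X \<in> cmeet V E K" and Y: "Y \<in> cmeet V E K" and fXY: "f X = f Y"
    have XCL: "X \<in> CL" "Y \<in> CL" using X Y by (simp_all add: cmeet_def)
    obtain x where x: "x \<in> X" using class_ne[OF XCL(1)] by blast
    obtain y where y: "y \<in> Y" using class_ne[OF XCL(2)] by blast
    have "(y \<in> K') = (x \<in> K')" if "K' \<in> MC" for K'
      using key[OF X that x] key[OF Y that y] fXY by simp
    then have "{K' \<in> MC. y \<in> K'} = {K' \<in> MC. x \<in> K'}" by blast
    then have "eqv y x" by (simp add: clique_equiv_def)
    moreover have yV: "y \<in> V" using in_class[OF XCL(2) y] by blast
    ultimately have "y \<in> cls V E x" by (simp add: cls_def)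
    then have "cls V E y = cls V E x" by (rule cls_eq)
    then show "X = Y" using in_class[OF XCL(1) x] in_class[OF XCL(2) y] by simp
  qed
  have sub: "f ` cmeet V E K \<subseteq> Pow ?S"
  proof
    fix Z assume "Z \<in> f ` cmeet V E K"
    then obtain X where X: "X \<in> cmeet V E K" "Z = f X" by blast
    have XK: "X \<subseteq> K" using mc_class[OF K] X by (simp add: cmeet_def)
    have "X \<noteq> {}" using X by (auto simp: cmeet_def)
    then show "Z \<in> Pow ?S" using X XK by (auto simp: f_def)
  qed
  have "k = card (f ` cmeet V E K)" unfolding k using card_image[OF inj] by simp
  also have "\<dots> \<le> card (Pow ?S)" by (rule card_mono[OF _ sub]) (simp add: fin_mc)
  also have "\<dots> = 2 ^ card ?S" by (simp add: card_Pow fin_mc)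
  also have "\<dots> \<le> 2 ^ cdeg V E" using cdeg_ge[OF K] by (simp add: power_increasing)
  finally show "k \<le> 2 ^ cdeg V E" .
qed

lemma L_theta: assumes v: "v \<in> V"
  shows "card (ncl V E v) \<le> theta_on V E (nb v) * quot_omega V E"
proof -
  let ?P = "\<lambda>k. \<exists>\<C>. finite \<C> \<and> card \<C> = k \<and> (\<forall>C\<in>\<C>. C \<subseteq> nb v \<and> is_clique V E C) \<and> \<Union>\<C> = nb v"
  have ex: "?P (card (ncl V E v))"
  proof (intro exI[of _ "ncl V E v"] conjI ballI)
    show "finite (ncl V E v)" by (rule fin_ncl)
    show "card (ncl V E v) = card (ncl V E v)" by simp
    show "\<Union>(ncl V E v) = nb v" by (rule union_ncl[OF v])
    fix C assume C: "C \<in> ncl V E v"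
    show "C \<subseteq> nb v" by (rule ncl_sub[OF C v])
    have "C \<in> CL" using C by (simp add: ncl_def)
    then show "is_clique V E C" by (rule class_clique)
  qed
  have "?P (LEAST k. ?P k)" by (rule LeastI_ex) (rule exI, rule ex)
  then have "?P (theta_on V E (nb v))" unfolding theta_on_def .
  then obtain \<C> where C: "finite \<C>" "card \<C> = theta_on V E (nb v)"
    "\<forall>C\<in>\<C>. C \<subseteq> nb v \<and> is_clique V E C" "\<Union>\<C> = nb v" by blast
  have sub: "ncl V E v \<subseteq> (\<Union>C\<in>\<C>. cmeet V E C)"
  proof
    fix X assume X: "X \<in> ncl V E v"
    obtain x where x: "x \<in> X" "x \<in> nb v" "X \<in> CL" using X unfolding ncl_def by blast
    then obtain C where "C \<in> \<C>" "x \<in> C" using C(4) by blast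
    then show "X \<in> (\<Union>C\<in>\<C>. cmeet V E C)" using x unfolding cmeet_def by blast
  qed
  have "card (ncl V E v) \<le> card (\<Union>C\<in>\<C>. cmeet V E C)"
    by (rule card_mono[OF _ sub]) (auto simp: C(1) fin_cmeet)
  also have "\<dots> \<le> card \<C> * quot_omega V E"
    by (rule card_UN_bound[OF C(1)]) (use C(3) clique_omega in blast)
  finally show ?thesis using C(2) by simp
qed

lemma alpha_on_le: "v \<in> V \<Longrightarrow> alpha_on V E (nb v) \<le> alpha_star V E"
  unfolding alpha_star_def by (rule maxn_ge) (auto simp: finV)

lemma theta_on_le: "v \<in> V \<Longrightarrow> theta_on V E (nb v) \<le> theta_star V E"
  unfolding theta_star_def by (rule maxn_ge) (auto simp: finV)

lemma L_alpha: assumes v: "v \<in> V"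
  shows "card (ncl V E v) < 2 ^ ((alpha_star V E + 1) + (quot_omega V E + 1))"
proof -
  define r where "r X = (SOME x. x \<in> X)" for X :: "nat set"
  have r: "X \<in> CL \<Longrightarrow> r X \<in> X" for X using class_ne unfolding r_def by (meson ex_in_conv someI_ex)
  have ncl_CL: "X \<in> ncl V E v \<Longrightarrow> X \<in> CL" for X by (simp add: ncl_def)
  let ?R = "r ` ncl V E v"
  have inj: "inj_on r (ncl V E v)"
  proof (rule inj_onI)
    fix X Y assume X: "X \<in> ncl V E v" and Y: "Y \<in> ncl V E v" and e: "r X = r Y"
    have "r X \<in> X" "r X \<in> Y" using r ncl_CL X Y e by metis+
    then show "X = Y" using cls_disj ncl_CL X Y by blast
  qed
  have Rnb: "?R \<subseteq> nb v" using r ncl_CL ncl_sub[OF _ v] by blast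
  have RV: "?R \<subseteq> V" using Rnb nb_sub[OF v] by blast
  have clsR: "r (cls V E x) = x" if x: "x \<in> ?R" for x
  proof -
    obtain X where X: "X \<in> ncl V E v" "x = r X" using x by blast
    then have "x \<in> X" using r ncl_CL by blast
    then have "X = cls V E x" using in_class ncl_CL X(1) by blast
    then show ?thesis using X by simp
  qed
  have "card ?R < 2 ^ ((alpha_star V E + 1) + (quot_omega V E + 1))"
  proof (rule ramsey)
    show "finite ?R" using fin_ncl by simp
    show "?R \<subseteq> V" by (rule RV)
    fix I assume I: "I \<subseteq> ?R" "is_indep V E I"
    have "card I \<le> alpha_on V E (nb v)" unfolding alpha_on_def
      by (rule maxn_ge[OF fin_alpha_set]) (use I Rnb in blast)
    then show "card I < alpha_star V E + 1" using alpha_on_le[OF v] by simp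
  next
    fix C assume C: "C \<subseteq> ?R" "is_clique V E C"
    have inj2: "inj_on (cls V E) C"
    proof (rule inj_onI)
      fix x y assume "x \<in> C" "y \<in> C" "cls V E x = cls V E y"
      then show "x = y" using clsR C(1) by (metis subsetD)
    qed
    have "cls V E ` C \<subseteq> cmeet V E C"
    proof
      fix X assume "X \<in> cls V E ` C"
      then obtain x where x: "x \<in> C" "X = cls V E x" by blast
      have xV: "x \<in> V" using x C(1) RV by blast
      show "X \<in> cmeet V E C" using cls_in[OF xV] cls_self[OF xV] x unfolding cmeet_def by blast
    qed
    then have "card (cls V E ` C) \<le> card (cmeet V E C)" by (rule card_mono[OF fin_cmeet])
    then have "card C \<le> quot_omega V E" using card_image[OF inj2] clique_omega[OF C(2)] by simp
    then show "card C < quot_omega V E + 1" by simp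
  qed
  then show ?thesis using card_image[OF inj] by simp
qed

end

definition Up :: "nat \<Rightarrow> nat" where "Up n = n * 2 ^ n + 2 ^ n"

lemma Up_mono: "a \<le> b \<Longrightarrow> Up a \<le> Up b"
  unfolding Up_def by (intro add_mono mult_le_mono power_increasing) auto

lemma Up_ge: "n \<le> Up n" "2 ^ n \<le> Up n" "n * 2 ^ n \<le> Up n"
proof -
  have "n < 2 ^ n" by (rule less_exp)
  then show "n \<le> Up n" unfolding Up_def by linarith
  show "2 ^ n \<le> Up n" "n * 2 ^ n \<le> Up n" unfolding Up_def by simp_all
qed

context sg
begin

lemma P_Delta: "Nst V E \<le> quot_Delta V E + 1"
  by (rule Nst_le) (rule L_Delta)

lemma P_cdeg: "Nst V E \<le> (cdeg V E + 1) * 2 ^ cdeg V E"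
proof (rule Nst_le)
  fix v assume v: "v \<in> V"
  have "card (ncl V E v) \<le> cideg V E * quot_omega V E" by (rule L_A[OF v])
  also have "\<dots> \<le> (cdeg V E + 1) * 2 ^ cdeg V E" using L_cideg L_omega by (rule mult_le_mono)
  finally show "card (ncl V E v) \<le> (cdeg V E + 1) * 2 ^ cdeg V E" .
qed

lemma P_A: "Nst V E \<le> max (cideg V E) (quot_omega V E) * max (cideg V E) (quot_omega V E)"
proof (rule Nst_le)
  fix v assume v: "v \<in> V"
  have "card (ncl V E v) \<le> cideg V E * quot_omega V E" by (rule L_A[OF v])
  also have "\<dots> \<le> max (cideg V E) (quot_omega V E) * max (cideg V E) (quot_omega V E)"
    by (rule mult_le_mono) simp_all
  finally show "card (ncl V E v) \<le> max (cideg V E) (quot_omega V E) * max (cideg V E) (quot_omega V E)" .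
qed

lemma P_B: "Nst V E \<le> 2 ^ ((max (alpha_star V E) (quot_omega V E) + 1) + (max (alpha_star V E) (quot_omega V E) + 1))"
proof (rule Nst_le)
  fix v assume v: "v \<in> V"
  have "card (ncl V E v) \<le> 2 ^ ((alpha_star V E + 1) + (quot_omega V E + 1))"
    using L_alpha[OF v] by simp
  also have "\<dots> \<le> 2 ^ ((max (alpha_star V E) (quot_omega V E) + 1) + (max (alpha_star V E) (quot_omega V E) + 1))"
    by (rule power_increasing) auto
  finally show "card (ncl V E v) \<le> 2 ^ ((max (alpha_star V E) (quot_omega V E) + 1) + (max (alpha_star V E) (quot_omega V E) + 1))" .
qed

lemma P_T: "Nst V E \<le> max (theta_star V E) (quot_omega V E) * max (theta_star V E) (quot_omega V E)"
proof (rule Nst_le)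
  fix v assume v: "v \<in> V"
  have "card (ncl V E v) \<le> theta_on V E (nb v) * quot_omega V E" by (rule L_theta[OF v])
  also have "\<dots> \<le> max (theta_star V E) (quot_omega V E) * max (theta_star V E) (quot_omega V E)"
    using theta_on_le[OF v] by (intro mult_le_mono) auto
  finally show "card (ncl V E v) \<le> max (theta_star V E) (quot_omega V E) * max (theta_star V E) (quot_omega V E)" .
qed

lemma Q_Delta: "quot_Delta V E \<le> Up (Nst V E)"
  using U_Delta Up_ge(1) le_trans by blast

lemma Q_cdeg: "cdeg V E \<le> Up (Nst V E)"
proof -
  have "cdeg V E \<le> quot_omega V E * cideg V E" by (rule U_cdeg)
  also have "\<dots> \<le> Nst V E * 2 ^ Nst V E" using U_omega U_cideg by (rule mult_le_mono)
  also have "\<dots> \<le> Up (Nst V E)" by (rule Up_ge(3))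
  finally show ?thesis .
qed

lemma Q_A: "max (cideg V E) (quot_omega V E) \<le> Up (Nst V E)"
proof -
  have "Nst V E < 2 ^ Nst V E" by (rule less_exp)
  then have "quot_omega V E \<le> 2 ^ Nst V E" using U_omega by linarith
  then have "max (cideg V E) (quot_omega V E) \<le> 2 ^ Nst V E" using U_cideg by simp
  then show ?thesis using Up_ge(2) le_trans by blast
qed

lemma Q_B: "max (alpha_star V E) (quot_omega V E) \<le> Up (Nst V E)"
  using U_alpha U_omega Up_ge(1)[of "Nst V E"] by simp

lemma Q_T: "max (theta_star V E) (quot_omega V E) \<le> Up (Nst V E)"
  using U_theta U_omega Up_ge(1)[of "Nst V E"] by simp

end

theorem corollary5p4:
  shows "\<forall>p \<in> {quot_Delta, cdeg,
                 (\<lambda>V E. max (cideg V E) (quot_omega V E)),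
                 (\<lambda>V E. max (alpha_star V E) (quot_omega V E)),
                 (\<lambda>V E. max (theta_star V E) (quot_omega V E))}.
         \<forall>q \<in> {quot_Delta, cdeg,
                 (\<lambda>V E. max (cideg V E) (quot_omega V E)),
                 (\<lambda>V E. max (alpha_star V E) (quot_omega V E)),
                 (\<lambda>V E. max (theta_star V E) (quot_omega V E))}.
           \<exists>g :: nat \<Rightarrow> nat. \<forall>V E. simple_graph V E \<longrightarrow> q V E \<le> g (p V E)"
proof -
  let ?S = "{quot_Delta, cdeg,
                 (\<lambda>V E. max (cideg V E) (quot_omega V E)),
                 (\<lambda>V E. max (alpha_star V E) (quot_omega V E)),
                 (\<lambda>V E. max (theta_star V E) (quot_omega V E))}"
  have P1: "\<exists>h. \<forall>V E. simple_graph V E \<longrightarrow> Nst V E \<le> h (quot_Delta V E)"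
  proof (rule exI[of _ "\<lambda>d. d + 1"], intro allI impI)
    fix V E assume "simple_graph V E"
    then show "Nst V E \<le> (\<lambda>d. d + 1) (quot_Delta V E)" using sg.P_Delta[OF sg.intro] by simp
  qed
  have P2: "\<exists>h. \<forall>V E. simple_graph V E \<longrightarrow> Nst V E \<le> h (cdeg V E)"
  proof (rule exI[of _ "\<lambda>c. (c + 1) * 2 ^ c"], intro allI impI)
    fix V E assume "simple_graph V E"
    then show "Nst V E \<le> (\<lambda>c. (c + 1) * 2 ^ c) (cdeg V E)" by (rule sg.P_cdeg[OF sg.intro])
  qed
  have P3: "\<exists>h. \<forall>V E. simple_graph V E \<longrightarrow> Nst V E \<le> h (max (cideg V E) (quot_omega V E))"
  proof (rule exI[of _ "\<lambda>a. a * a"], intro allI impI)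
    fix V E assume "simple_graph V E"
    then show "Nst V E \<le> (\<lambda>a. a * a) (max (cideg V E) (quot_omega V E))" by (rule sg.P_A[OF sg.intro])
  qed
  have P4: "\<exists>h. \<forall>V E. simple_graph V E \<longrightarrow> Nst V E \<le> h (max (alpha_star V E) (quot_omega V E))"
  proof (rule exI[of _ "\<lambda>b. 2 ^ ((b + 1) + (b + 1))"], intro allI impI)
    fix V E assume "simple_graph V E"
    then show "Nst V E \<le> (\<lambda>b. 2 ^ ((b + 1) + (b + 1))) (max (alpha_star V E) (quot_omega V E))" by (rule sg.P_B[OF sg.intro])
  qed
  have P5: "\<exists>h. \<forall>V E. simple_graph V E \<longrightarrow> Nst V E \<le> h (max (theta_star V E) (quot_omega V E))"
  proof (rule exI[of _ "\<lambda>a. a * a"], intro allI impI)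
    fix V E assume "simple_graph V E"
    then show "Nst V E \<le> (\<lambda>a. a * a) (max (theta_star V E) (quot_omega V E))" by (rule sg.P_T[OF sg.intro])
  qed
  have P: "\<forall>p\<in>?S. \<exists>h. \<forall>V E. simple_graph V E \<longrightarrow> Nst V E \<le> h (p V E)"
    using P1 P2 P3 P4 P5 by simp
  have Q: "\<forall>q\<in>?S. \<forall>V E. simple_graph V E \<longrightarrow> q V E \<le> Up (Nst V E)"
    using sg.Q_Delta[OF sg.intro] sg.Q_cdeg[OF sg.intro] sg.Q_A[OF sg.intro]
      sg.Q_B[OF sg.intro] sg.Q_T[OF sg.intro] by simp
  show ?thesis
  proof (intro ballI)
    fix p q assume p: "p \<in> ?S" and q: "q \<in> ?S"
    have "\<exists>h. \<forall>V E. simple_graph V E \<longrightarrow> Nst V E \<le> h (p V E)" using P p by (rule bspec)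
    then obtain h where h: "\<forall>V E. simple_graph V E \<longrightarrow> Nst V E \<le> h (p V E)" ..
    show "\<exists>g. \<forall>V E. simple_graph V E \<longrightarrow> q V E \<le> g (p V E)"
    proof (intro exI[of _ "\<lambda>n. Up (h n)"] allI impI)
      fix V E assume G: "simple_graph V E"
      have "\<forall>V E. simple_graph V E \<longrightarrow> q V E \<le> Up (Nst V E)" using Q q by (rule bspec)
      then have "q V E \<le> Up (Nst V E)" using G by blast
      also have "\<dots> \<le> Up (h (p V E))" using Up_mono h G by blast
      finally show "q V E \<le> (\<lambda>n. Up (h n)) (p V E)" by simp
    qed
  qed
qed

end
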